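(* Let $N\ge 2$, $1\le r<N$, and consider a single reversible reaction with stoichiometric vector $\sigma=(\sigma_1,\dots,\sigma_N)^{\rm T}=(-\alpha_1,\dots,-\alpha_r,\beta_{r+1},\dots,\beta_N)^{\rm T}$, where $\alpha_i>0$ for $i\le r$ and $\beta_i>0$ for $i>r$. Let $U_1,\dots,U_N\in\mathbb{R}$, $k_1^->0$, $\Delta t>0$. Let $c^0\in\mathbb{R}^N$ with $c^0_i>0$ for all $i$, set $c(R)=c^0+\sigma R$ for $R\in\mathbb{R}$, and let $R^n=0$. Let $\widehat R^{n+1}\in\mathbb{R}$ be any number with $c_i(\widehat R^{n+1})>0$ for all $i$ (for instance the solution of the first-order predictor scheme described in the context), put $\widehat R^{n+1/2}=\tfrac12(R^n+\widehat R^{n+1})$ and $\hat\eta=\eta(c(\widehat R^{n+1/2}))$. Then there exists a unique $R^{n+1}\in\mathbb{R}$ such that $c_i(R^{n+1})>0$ for all $i$, $R^{n+1}-R^n+\hat\eta\,\Delta t>0$, and $$\ln\Big(\frac{R^{n+1}-R^n}{\hat\eta\,\Delta t}+1\Big)=-\mu_R^{n+1/2},\qquad \mu_R^{n+1/2}=\phi(R^{n+1},R^n)+\Delta t\sum_{i=1}^N\sigma_i\big(\mu_i(R^{n+1})-\mu_i(R^n)\big).$$ Moreover, $R^{n+1}$ is the unique minimizer over $\{R: c_i(R)>0\ \forall i,\ R-R^n+\hat\eta\Delta t>0\}$ of the strictly convex function $$J_n(R)=(R-R^n+\hat\eta\Delta t)\ln\Big(\frac{R-R^n}{\hat\eta\Delta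 t}+1\Big)-(R-R^n)+\int_{R^n}^R\phi(s,R^n)\,ds+\Delta t\,F(R)-\gamma^n R,$$ where $\gamma^n=\Delta t\sum_{i=1}^N\sigma_i\mu_i(R^n)$.
   Context: For $R$ with $c_i(R)>0$ for all $i$, define the (pointwise) free energy $F(R)=\sum_{i=1}^N\big[c_i(R)(\ln c_i(R)-1)+c_i(R)U_i\big]$, the chemical potentials $\mu_i(R)=\ln c_i(R)+U_i$ (so $F'(R)=\sum_i\sigma_i\mu_i(R)$), and the mobility $\eta(c)=k_1^-\prod_{i=r+1}^N c_i^{\beta_i}$ for $c$ with positive components. The discrete variational derivative is $\phi(p,q)=\frac{F(p)-F(q)}{p-q}$ if $p\neq q$ and $\phi(p,p)=F'(p)$. A first-order predictor $\widehat R^{n+1}$ may be obtained by solving $\ln\big(\frac{\widehat R^{n+1}-R^n}{\eta(c(R^n))\Delta t}+1\big)=-\sum_{i=1}^N\sigma_i\mu_i(\widehat R^{n+1})$ with $c(\widehat R^{n+1})$ componentwise positive. *)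

theory Defs
  imports "HOL-Analysis.Analysis"
begin

text \<open>Species are indexed by 1..N; vectors are functions nat => real.\<close>

definition sigma :: "nat \<Rightarrow> (nat \<Rightarrow> real) \<Rightarrow> (nat \<Rightarrow> real) \<Rightarrow> nat \<Rightarrow> real" where
  "sigma r \<alpha> \<beta> i = (if i \<le> r then - \<alpha> i else \<beta> i)"

definition conc :: "(nat \<Rightarrow> real) \<Rightarrow> (nat \<Rightarrow> real) \<Rightarrow> real \<Rightarrow> nat \<Rightarrow> real" where
  "conc c0 \<sigma> R i = c0 i + \<sigma> i * R"

definition freeE :: "nat \<Rightarrow> (nat \<Rightarrow> real) \<Rightarrow> (nat \<Rightarrow> real) \<Rightarrow> (nat \<Rightarrow> real) \<Rightarrow> real \<Rightarrow> real" where
  "freeE N c0 \<sigma> U R = (\<Sum>i=1..N. conc c0 \<sigma> R i * (ln (conc c0 \<sigma> R i) - 1) + conc c0 \<sigma> R i * U i)"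

definition chempot :: "(nat \<Rightarrow> real) \<Rightarrow> (nat \<Rightarrow> real) \<Rightarrow> (nat \<Rightarrow> real) \<Rightarrow> nat \<Rightarrow> real \<Rightarrow> real" where
  "chempot c0 \<sigma> U i R = ln (conc c0 \<sigma> R i) + U i"

definition mobility :: "real \<Rightarrow> nat \<Rightarrow> nat \<Rightarrow> (nat \<Rightarrow> real) \<Rightarrow> (nat \<Rightarrow> real) \<Rightarrow> real" where
  "mobility k r N \<beta> c = k * (\<Prod>i=r+1..N. c i powr \<beta> i)"

text \<open>discrete variational derivative; F'(p) = sum_i sigma_i mu_i(p)\<close>
definition dvd_phi :: "nat \<Rightarrow> (nat \<Rightarrow> real) \<Rightarrow> (nat \<Rightarrow> real) \<Rightarrow> (nat \<Rightarrow> real) \<Rightarrow> real \<Rightarrow> real \<Rightarrow> real" where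
  "dvd_phi N c0 \<sigma> U p q =
     (if p \<noteq> q then (freeE N c0 \<sigma> U p - freeE N c0 \<sigma> U q) / (p - q)
      else (\<Sum>i=1..N. \<sigma> i * chempot c0 \<sigma> U i p))"

text \<open>The functional J_n (with R^n, eta-hat, Delta t as parameters); the integral is oriented.\<close>
definition Jn :: "nat \<Rightarrow> (nat \<Rightarrow> real) \<Rightarrow> (nat \<Rightarrow> real) \<Rightarrow> (nat \<Rightarrow> real) \<Rightarrow> real \<Rightarrow> real \<Rightarrow> real \<Rightarrow> real \<Rightarrow> real" where
  "Jn N c0 \<sigma> U Rn eta dt R =
     (R - Rn + eta * dt) * ln ((R - Rn) / (eta * dt) + 1) - (R - Rn)
     + (LBINT s=Rn..R. dvd_phi N c0 \<sigma> U s Rn)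
     + dt * freeE N c0 \<sigma> U R
     - (dt * (\<Sum>i=1..N. \<sigma> i * chempot c0 \<sigma> U i Rn)) * R"

definition strictly_convex_on :: "real set \<Rightarrow> (real \<Rightarrow> real) \<Rightarrow> bool" where
  "strictly_convex_on D f \<longleftrightarrow> convex D \<and>
     (\<forall>x\<in>D. \<forall>y\<in>D. \<forall>t::real. x \<noteq> y \<and> 0 < t \<and> t < 1 \<longrightarrow>
        f ((1 - t) * x + t * y) < (1 - t) * f x + t * f y)"

end

theory Submission
  imports Defs
begin


lemma ftc_open:
  fixes f :: "real \<Rightarrow> real"
  assumes "a < c" "c < b" "continuous_on {a<..<b} f" "a < x" "x < b"
  shows "((\<lambda>u. LBINT y=c..u. f y) has_real_derivative f x) (at x)"
proof -
  define d where "d = (a + min c x)/2"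
  define e where "e = (max c x + b)/2"
  have de: "a < d" "d < c" "d < x" "c < e" "x < e" "e < b" using assms by (auto simp: d_def e_def)
  have "continuous_on {d..e} f"
    by (rule continuous_on_subset[OF assms(3)]) (use de in auto)
  then have "((\<lambda>u. LBINT y=c..u. f y) has_vector_derivative f x) (at x within {d..e})"
    by (intro interval_integral_FTC2) (use de in linarith)+
  then show ?thesis
    using de by (simp add: at_within_Icc_at has_real_derivative_iff_has_vector_derivative)
qed

lemma mvt_strict_conv:
  fixes f g :: "real \<Rightarrow> real"
  assumes deriv: "\<And>x. a < x \<Longrightarrow> x < b \<Longrightarrow> (f has_real_derivative g x) (at x)"
    and mono: "\<And>x y. a < x \<Longrightarrow> x < y \<Longrightarrow> y < b \<Longrightarrow> g x < g y"
  shows "strictly_convex_on {a<..<b} f"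
proof -
  have key: "f ((1 - t) * x + t * y) < (1 - t) * f x + t * f y"
    if xy: "a < x" "x < y" "y < b" and t: "0 < t" "t < 1" for x y t
  proof -
    define z where "z = (1 - t) * x + t * y"
    have zx: "z - x = t * (y - x)" and yz: "y - z = (1 - t) * (y - x)" by (simp_all add: z_def algebra_simps)
    have "0 < t * (y - x)" "0 < (1 - t) * (y - x)" using xy t by simp_all
    then have z: "x < z" "z < y" using zx yz by (metis diff_gt_0_iff_gt)+
    obtain u where u: "x < u" "u < z" "f z - f x = (z - x) * g u"
      using MVT2[of x z f g] z xy deriv by (smt (verit))
    obtain v where v: "z < v" "v < y" "f y - f z = (y - z) * g v"
      using MVT2[of z y f g] z xy deriv by (smt (verit))
    have "g u < g v" using mono[of u v] u v xy by linarith
    then have "0 < t * (1 - t) * (y - x) * (g v - g u)" using xy t by simp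
    also have "\<dots> = t * ((1 - t) * (y - x) * g v) - (1 - t) * (t * (y - x) * g u)"
      by (simp add: algebra_simps)
    also have "\<dots> = t * (f y - f z) - (1 - t) * (f z - f x)"
      using u(3) v(3) zx yz by simp
    finally show ?thesis unfolding z_def[symmetric] by (simp add: algebra_simps)
  qed
  show ?thesis
    unfolding strictly_convex_on_def
  proof (intro conjI ballI allI impI)
    show "convex {a<..<b}" by simp
    fix x y :: real and t :: real assume x: "x \<in> {a<..<b}" and y: "y \<in> {a<..<b}" and h: "x \<noteq> y \<and> 0 < t \<and> t < 1"
    show "f ((1 - t) * x + t * y) < (1 - t) * f x + t * f y"
    proof (cases "x < y")
      case True then show ?thesis using key[of x y t] x y h by auto
    next
      case False
      then have "y < x" using h by auto
      then have "f ((1 - (1 - t)) * y + (1 - t) * x) < (1 - (1 - t)) * f y + (1 - t) * f x"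
        using key[of y x "1 - t"] x y h by auto
      then show ?thesis by (simp add: algebra_simps)
    qed
  qed
qed

lemma mvt_min:
  fixes f g :: "real \<Rightarrow> real"
  assumes deriv: "\<And>x. a < x \<Longrightarrow> x < b \<Longrightarrow> (f has_real_derivative g x) (at x)"
    and mono: "\<And>x y. a < x \<Longrightarrow> x < y \<Longrightarrow> y < b \<Longrightarrow> g x < g y"
    and R: "a < R" "R < b" "g R = 0" and S: "a < S" "S < b" "S \<noteq> R"
  shows "f R < f S"
proof (cases "R < S")
  case True
  obtain u where u: "R < u" "u < S" "f S - f R = (S - R) * g u"
    using MVT2[of R S f g] True R S deriv by (smt (verit))
  have "g u > 0" using mono[of R u] u R S by auto
  then show ?thesis using u True by (smt (verit) mult_pos_pos)
next
  case False
  then have SR: "S < R" using S by auto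
  obtain u where u: "S < u" "u < R" "f R - f S = (R - S) * g u"
    using MVT2[of S R f g] SR R S deriv by (smt (verit))
  have "g u < 0" using mono[of u R] u R S by auto
  then show ?thesis using u SR by (smt (verit) mult_pos_neg)
qed



lemma slope_mono:
  fixes F dF :: "real \<Rightarrow> real"
  assumes deriv: "\<And>x. a < x \<Longrightarrow> x < b \<Longrightarrow> (F has_real_derivative dF x) (at x)"
    and mono: "\<And>x y. a < x \<Longrightarrow> x \<le> y \<Longrightarrow> y < b \<Longrightarrow> dF x \<le> dF y"
    and c: "a < c" "c < b" and xy: "a < x" "x \<le> y" "y < b"
  shows "(if x \<noteq> c then (F x - F c)/(x - c) else dF c) \<le> (if y \<noteq> c then (F y - F c)/(y - c) else dF c)"
proof -
  have cv: "convex_on {a<..<b} F"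
  proof (rule convex_on_realI[where f'=dF])
    show "connected {a<..<b}" by simp
  qed (auto intro: deriv mono)
  have xI: "x \<in> {a<..<b}" and yI: "y \<in> {a<..<b}" and cI: "c \<in> {a<..<b}" using xy c by auto
  show ?thesis
  proof (cases "x = y")
    case True then show ?thesis by simp
  next
    case False
    then have xy': "x < y" using xy by simp
    consider "x = c" | "y = c" | "x < y \<and> y < c" | "c < x" | "x < c \<and> c < y" using xy' by linarith
    then show ?thesis
    proof cases
      case 1
      obtain u where u: "c < u" "u < y" "F y - F c = (y - c) * dF u"
        using MVT2[of c y F dF] 1 xy' xy c deriv by (smt (verit))
      have "dF c \<le> dF u" using mono[of c u] u c xy by simp
      then show ?thesis using 1 xy' u by simp
    next
      case 2
      obtain u where u: "x < u" "u < c" "F c - F x = (c - x) * dF u"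
        using MVT2[of x c F dF] 2 xy' xy c deriv by (smt (verit))
      have "dF u \<le> dF c" using mono[of u c] u c xy by simp
      moreover have "(F x - F c) / (x - c) = dF u"
        using u by (simp add: divide_simps) (simp add: algebra_simps)
      ultimately show ?thesis using 2 xy' u by simp
    next
      case 3
      then show ?thesis using convex_on_slope_le(2)[OF cv xI cI, of y] by auto
    next
      case 4
      have "(F c - F x) / (c - x) \<le> (F c - F y) / (c - y)"
        using convex_on_slope_le(1)[OF cv cI yI, of x] 4 xy' by auto
      moreover have "(F c - F x) / (c - x) = (F x - F c) / (x - c)" "(F c - F y) / (c - y) = (F y - F c) / (y - c)"
        by (metis minus_diff_eq minus_divide_divide)+
      ultimately show ?thesis using 4 xy' by auto
    next
      case 5
      have "(F x - F c) / (x - c) \<le> (F x - F y) / (x - y)"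
        "(F x - F y) / (x - y) \<le> (F c - F y) / (c - y)"
        using convex_on_slope_le[OF cv xI yI, of c] 5 by auto
      moreover have "(F c - F y) / (c - y) = (F y - F c) / (y - c)"
        by (metis minus_diff_eq minus_divide_divide)+
      ultimately show ?thesis using 5 by auto
    qed
  qed
qed

lemma slope_cont:
  fixes F dF :: "real \<Rightarrow> real"
  assumes deriv: "\<And>x. a < x \<Longrightarrow> x < b \<Longrightarrow> (F has_real_derivative dF x) (at x)"
    and c: "a < c" "c < b"
  shows "continuous_on {a<..<b} (\<lambda>x. if x \<noteq> c then (F x - F c)/(x - c) else dF c)"
proof (intro continuous_at_imp_continuous_on ballI)
  fix x assume x: "x \<in> {a<..<b}"
  show "isCont (\<lambda>x. if x \<noteq> c then (F x - F c)/(x - c) else dF c) x"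
  proof (cases "x = c")
    case True
    have "((\<lambda>y. (F y - F c) / (y - c)) \<longlongrightarrow> dF c) (at c)"
      using deriv[of c] c by (simp add: has_field_derivative_iff)
    then have "((\<lambda>y. if y \<noteq> c then (F y - F c)/(y - c) else dF c) \<longlongrightarrow> dF c) (at c)"
      by (rule tendsto_cong[THEN iffD1, rotated]) (auto simp: eventually_at_filter)
    then show ?thesis using True by (simp add: isCont_def)
  next
    case False
    have ev: "eventually (\<lambda>y. y \<noteq> c) (nhds x)"
      using False by (intro t1_space_nhds) 
    have "isCont (\<lambda>y. (F y - F c)/(y - c)) x"
    proof -
      have "isCont F x" using deriv[of x] x DERIV_isCont by auto
      then show ?thesis using False by (auto intro!: continuous_intros)
    qed
    moreover have "isCont (\<lambda>x. if x \<noteq> c then (F x - F c)/(x - c) else dF c) x \<longleftrightarrow> isCont (\<lambda>y. (F y - F c)/(y - c)) x"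
      by (rule isCont_cong) (use ev in \<open>simp add: eventually_mono\<close>)
    ultimately show ?thesis by simp
  qed
qed



lemma small_delta:
  fixes A B K :: real
  assumes "A > 0" "B > 0"
  shows "\<exists>\<delta>>0. \<delta> < B \<and> ln (A * \<delta>) < K"
proof -
  define \<delta> where "\<delta> = min (B/2) (exp K / (2*A))"
  have d: "\<delta> > 0" "\<delta> < B" using assms by (auto simp: \<delta>_def)
  have "A * \<delta> \<le> exp K / 2" using assms
    by (simp add: \<delta>_def min_def) (simp add: field_simps)
  then have "A * \<delta> < exp K" using exp_gt_zero[of K] by linarith
  then have "ln (A * \<delta>) < K" using d assms
    by (metis ln_exp ln_less_cancel_iff exp_gt_zero mult_pos_pos)
  with d show ?thesis by blast
qed

lemma ent_deriv: "0 < c0 + s * x \<Longrightarrow> ((\<lambda>x. (c0 + s * x) * (ln (c0 + s*x) - 1) + (c0 + s*x) * u)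
        has_real_derivative s * (ln (c0 + s*x) + u)) (at x)"
  by (rule derivative_eq_intros refl | simp)+  (simp add: algebra_simps)

lemma xlog_deriv: "0 < e \<Longrightarrow> 0 < x/e+1 \<Longrightarrow> ((\<lambda>x. (x+e)*ln(x/e+1)) has_real_derivative ln(x/e+1)+1) (at x)"
  by (rule derivative_eq_intros refl | simp)+  (simp add: field_simps)

theorem theorem3p1:
  fixes N r :: nat and \<alpha> \<beta> U c0 :: "nat \<Rightarrow> real"
    and k1m dt Rn Rhat :: real
  assumes N2: "N \<ge> 2" and r1: "1 \<le> r" and rN: "r < N"
    and alpha_pos: "\<forall>i\<in>{1..r}. \<alpha> i > 0"
    and beta_pos: "\<forall>i\<in>{r+1..N}. \<beta> i > 0"
    and k_pos: "k1m > 0" and dt_pos: "dt > 0"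
    and c0_pos: "\<forall>i\<in>{1..N}. c0 i > 0"
    and Rn0: "Rn = 0"
    and Rhat_pos: "\<forall>i\<in>{1..N}. conc c0 (sigma r \<alpha> \<beta>) Rhat i > 0"
  shows "let \<sigma> = sigma r \<alpha> \<beta>;
             eta = mobility k1m r N \<beta> (conc c0 \<sigma> ((Rn + Rhat) / 2));
             D = {R. (\<forall>i\<in>{1..N}. conc c0 \<sigma> R i > 0) \<and> R - Rn + eta * dt > 0};
             scheme = (\<lambda>R. ln ((R - Rn) / (eta * dt) + 1) =
                 - (dvd_phi N c0 \<sigma> U R Rn
                    + dt * (\<Sum>i=1..N. \<sigma> i * (chempot c0 \<sigma> U i R - chempot c0 \<sigma> U i Rn))))
         in (\<exists>!R. R \<in> D \<and> scheme R)
            \<and> (\<forall>R. R \<in> D \<and> scheme R \<longrightarrow>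
                  (\<forall>S\<in>D. S \<noteq> R \<longrightarrow> Jn N c0 \<sigma> U Rn eta dt R < Jn N c0 \<sigma> U Rn eta dt S))
            \<and> strictly_convex_on D (Jn N c0 \<sigma> U Rn eta dt)"
proof -
  define \<sigma> where "\<sigma> = sigma r \<alpha> \<beta>"
  define \<eta> where "\<eta> = mobility k1m r N \<beta> (conc c0 \<sigma> ((Rn + Rhat) / 2))"
  define F where "F = freeE N c0 \<sigma> U"
  define dF where "dF = (\<lambda>x. \<Sum>i=1..N. \<sigma> i * chempot c0 \<sigma> U i x)"
  define phi where "phi = (\<lambda>x. dvd_phi N c0 \<sigma> U x 0)"
  define G where "G = (\<lambda>x. ln (x / (\<eta> * dt) + 1) + phi x
                      + dt * (\<Sum>i=1..N. \<sigma> i * (chempot c0 \<sigma> U i x - chempot c0 \<sigma> U i 0)))"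
  define J where "J = Jn N c0 \<sigma> U 0 \<eta> dt"
  have sa: "\<And>i. i \<in> {1..r} \<Longrightarrow> \<sigma> i = - \<alpha> i" by (simp add: \<sigma>_def sigma_def)
  have sb: "\<And>i. i \<in> {r+1..N} \<Longrightarrow> \<sigma> i = \<beta> i" by (simp add: \<sigma>_def sigma_def)
  have sig_cases: "\<And>i. i \<in> {1..N} \<Longrightarrow> (i \<in> {1..r} \<and> \<sigma> i = - \<alpha> i \<and> \<alpha> i > 0) \<or> (i \<in> {r+1..N} \<and> \<sigma> i = \<beta> i \<and> \<beta> i > 0)"
  proof -
    fix i assume i: "i \<in> {1..N}"
    show "?thesis i" by (cases "i \<le> r") (use i sa sb alpha_pos beta_pos in auto)
  qed
  have c0p: "\<And>i. i \<in> {1..N} \<Longrightarrow> c0 i > 0" using c0_pos by auto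
  have hp: "\<And>i. i \<in> {1..N} \<Longrightarrow> c0 i + \<sigma> i * Rhat > 0" using Rhat_pos by (auto simp: conc_def \<sigma>_def)
  have eta_pos: "\<eta> > 0"
  proof -
    have "\<And>i. i \<in> {r+1..N} \<Longrightarrow> conc c0 \<sigma> ((Rn + Rhat) / 2) i > 0"
    proof -
      fix i assume i: "i \<in> {r+1..N}"
      then have i': "i \<in> {1..N}" by auto
      have "conc c0 \<sigma> ((Rn + Rhat) / 2) i = (c0 i + (c0 i + \<sigma> i * Rhat)) / 2"
        by (simp add: conc_def Rn0 algebra_simps)
      then show "conc c0 \<sigma> ((Rn + Rhat) / 2) i > 0" using c0p[OF i'] hp[OF i'] by simp
    qed
    then have "\<And>i. i \<in> {r+1..N} \<Longrightarrow> conc c0 \<sigma> ((Rn + Rhat) / 2) i powr \<beta> i > 0"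
      by (metis less_irrefl powr_gt_zero)
    then have "(\<Prod>i=r+1..N. conc c0 \<sigma> ((Rn + Rhat) / 2) i powr \<beta> i) > 0"
      by (rule prod_pos) simp
    then show ?thesis unfolding \<eta>_def mobility_def using k_pos by simp
  qed
  have ed: "\<eta> * dt > 0" using eta_pos dt_pos by simp
  define b where "b = Min ((\<lambda>i. c0 i / \<alpha> i) ` {1..r})"
  have bfin: "finite ((\<lambda>i. c0 i / \<alpha> i) ` {1..r})" "(\<lambda>i. c0 i / \<alpha> i) ` {1..r} \<noteq> {}" using r1 by auto
  obtain j where j: "j \<in> {1..r}" "b = c0 j / \<alpha> j"
    using Min_in[OF bfin] unfolding b_def by auto
  have ble: "\<And>i. i \<in> {1..r} \<Longrightarrow> b \<le> c0 i / \<alpha> i" unfolding b_def using bfin by auto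
  have aj: "\<alpha> j > 0" using j alpha_pos by auto
  have c0j: "c0 j > 0" using j rN c0p by auto
  have bpos: "b > 0" using j aj c0j by simp
  define M where "M = insert (\<eta> * dt) ((\<lambda>i. c0 i / \<beta> i) ` {r+1..N})"
  define m where "m = Min M"
  have Mfin: "finite M" "M \<noteq> {}" by (auto simp: M_def)
  have mM: "m \<in> M" unfolding m_def using Min_in[OF Mfin] .
  have mle1: "m \<le> \<eta> * dt" unfolding m_def M_def using Mfin by (auto simp: M_def)
  have mle2: "\<And>i. i \<in> {r+1..N} \<Longrightarrow> m \<le> c0 i / \<beta> i"
  proof -
    fix i assume i: "i \<in> {r+1..N}"
    have "c0 i / \<beta> i \<in> M" using i by (simp add: M_def)
    then show "m \<le> c0 i / \<beta> i" unfolding m_def using Mfin(1) by (rule Min_le[rotated])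
  qed
  have mpos: "m > 0"
  proof -
    have "\<forall>x\<in>M. x > 0" using ed beta_pos c0p by (auto simp: M_def)
    then show ?thesis using mM by auto
  qed
  define a where "a = - m"
  have ab: "a < 0" "0 < b" using mpos bpos by (auto simp: a_def)
  have pos: "\<And>x i. a < x \<Longrightarrow> x < b \<Longrightarrow> i \<in> {1..N} \<Longrightarrow> 0 < c0 i + \<sigma> i * x"
  proof -
    fix x i assume x: "a < x" "x < b" and i: "i \<in> {1..N}"
    from sig_cases[OF i] show "0 < c0 i + \<sigma> i * x"
    proof
      assume h: "i \<in> {1..r} \<and> \<sigma> i = - \<alpha> i \<and> \<alpha> i > 0"
      then have "x < c0 i / \<alpha> i" using ble[of i] x by auto
      then show ?thesis using h by (simp add: field_simps)
    next
      assume h: "i \<in> {r+1..N} \<and> \<sigma> i = \<beta> i \<and> \<beta> i > 0"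
      then have "- (c0 i / \<beta> i) < x" using mle2[of i] x by (auto simp: a_def)
      then show ?thesis using h by (simp add: field_simps)
    qed
  qed
  have posed: "\<And>x. a < x \<Longrightarrow> 0 < x / (\<eta> * dt) + 1"
  proof -
    fix x assume "a < x"
    then have "0 < x + \<eta> * dt" using mle1 by (simp add: a_def)
    moreover have "x / (\<eta> * dt) + 1 = (x + \<eta> * dt) / (\<eta> * dt)" using eta_pos dt_pos by (simp add: field_simps)
    ultimately show "0 < x / (\<eta> * dt) + 1" using ed by simp
  qed
  have Deq: "{R. (\<forall>i\<in>{1..N}. conc c0 \<sigma> R i > 0) \<and> R - Rn + \<eta> * dt > 0} = {a<..<b}"
  proof (intro set_eqI iffI)
    fix x assume "x \<in> {a<..<b}"
    then show "x \<in> {R. (\<forall>i\<in>{1..N}. conc c0 \<sigma> R i > 0) \<and> R - Rn + \<eta> * dt > 0}"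
      using pos[of x] mle1 by (auto simp: conc_def Rn0 a_def)
  next
    fix x assume x: "x \<in> {R. (\<forall>i\<in>{1..N}. conc c0 \<sigma> R i > 0) \<and> R - Rn + \<eta> * dt > 0}"
    have "x < b"
    proof -
      have "j \<in> {1..N}" using j rN by auto
      then have "0 < conc c0 \<sigma> x j" using x by blast
      then have "0 < c0 j - \<alpha> j * x" using sa[OF j(1)] by (simp add: conc_def)
      then show ?thesis using j aj by (simp add: pos_less_divide_eq mult.commute)
    qed
    moreover have "a < x"
    proof -
      have "m \<in> M" by (rule mM)
      then consider "m = \<eta> * dt" | k where "k \<in> {r+1..N}" "m = c0 k / \<beta> k" by (auto simp: M_def)
      then show ?thesis
      proof cases
        case 1 then show ?thesis using x by (auto simp: a_def Rn0)
      next
        case 2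
        have "k \<in> {1..N}" using 2 by auto
        then have "0 < conc c0 \<sigma> x k" using x by blast
        then have "0 < c0 k + \<beta> k * x" using sb[OF 2(1)] by (simp add: conc_def)
        moreover have "\<beta> k > 0" using 2 beta_pos by auto
        ultimately have bk: "0 < c0 k + \<beta> k * x" "\<beta> k > 0" by auto
        have mk: "m * \<beta> k = c0 k" using 2 bk by simp
        have "(x + m) * \<beta> k = c0 k + \<beta> k * x" using mk by (simp add: algebra_simps)
        then have "0 < (x + m) * \<beta> k" using bk by simp
        then have "0 < x + m" using bk by (simp add: zero_less_mult_iff)
        then show ?thesis by (simp add: a_def)
      qed
    qed
    ultimately show "x \<in> {a<..<b}" by auto
  qed
  have Fderiv: "\<And>x. a < x \<Longrightarrow> x < b \<Longrightarrow> (F has_real_derivative dF x) (at x)"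
  proof -
    fix x assume x: "a < x" "x < b"
    have "\<And>i. i \<in> {1..N} \<Longrightarrow> ((\<lambda>x. conc c0 \<sigma> x i * (ln (conc c0 \<sigma> x i) - 1) + conc c0 \<sigma> x i * U i)
        has_real_derivative \<sigma> i * chempot c0 \<sigma> U i x) (at x)"
    proof -
      fix i assume i: "i \<in> {1..N}"
      have p: "0 < c0 i + \<sigma> i * x" using pos[OF x i] .
      show "((\<lambda>x. conc c0 \<sigma> x i * (ln (conc c0 \<sigma> x i) - 1) + conc c0 \<sigma> x i * U i)
        has_real_derivative \<sigma> i * chempot c0 \<sigma> U i x) (at x)"
        unfolding conc_def chempot_def using p by (rule ent_deriv)
    qed
    then show "(F has_real_derivative dF x) (at x)"
      unfolding F_def dF_def freeE_def by (rule DERIV_sum)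
  qed
  have term_mono: "\<And>x y i. a < x \<Longrightarrow> x \<le> y \<Longrightarrow> y < b \<Longrightarrow> i \<in> {1..N} \<Longrightarrow>
      \<sigma> i * chempot c0 \<sigma> U i x \<le> \<sigma> i * chempot c0 \<sigma> U i y"
  proof -
    fix x y i assume xy: "a < x" "x \<le> y" "y < b" and i: "i \<in> {1..N}"
    have px: "0 < c0 i + \<sigma> i * x" and py: "0 < c0 i + \<sigma> i * y" using pos[OF _ _ i] xy by auto
    show "\<sigma> i * chempot c0 \<sigma> U i x \<le> \<sigma> i * chempot c0 \<sigma> U i y"
    proof (cases "\<sigma> i \<ge> 0")
      case True
      then have "c0 i + \<sigma> i * x \<le> c0 i + \<sigma> i * y" using xy by (simp add: mult_left_mono)
      then have "ln (c0 i + \<sigma> i * x) \<le> ln (c0 i + \<sigma> i * y)" using px py by simp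
      then show ?thesis using True by (simp add: chempot_def conc_def mult_left_mono)
    next
      case False
      then have "c0 i + \<sigma> i * y \<le> c0 i + \<sigma> i * x" using xy by (simp add: mult_left_mono_neg)
      then have "ln (c0 i + \<sigma> i * y) \<le> ln (c0 i + \<sigma> i * x)" using px py by simp
      then show ?thesis using False by (simp add: chempot_def conc_def mult_left_mono_neg)
    qed
  qed
  have dFmono: "\<And>x y. a < x \<Longrightarrow> x \<le> y \<Longrightarrow> y < b \<Longrightarrow> dF x \<le> dF y"
    unfolding dF_def by (rule sum_mono) (rule term_mono)
  have phi_eq: "phi = (\<lambda>x. if x \<noteq> 0 then (F x - F 0) / (x - 0) else dF 0)"
    by (auto simp: phi_def dvd_phi_def F_def dF_def fun_eq_iff)
  have phimono: "\<And>x y. a < x \<Longrightarrow> x \<le> y \<Longrightarrow> y < b \<Longrightarrow> phi x \<le> phi y"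
    unfolding phi_eq by (rule slope_mono[where a=a and b=b]) (use Fderiv dFmono ab in auto)
  have phicont: "continuous_on {a<..<b} phi"
    unfolding phi_eq by (rule slope_cont) (use Fderiv ab in auto)
  have Gmono: "\<And>x y. a < x \<Longrightarrow> x < y \<Longrightarrow> y < b \<Longrightarrow> G x < G y"
  proof -
    fix x y assume xy: "a < x" "x < y" "y < b"
    have "x / (\<eta> * dt) + 1 < y / (\<eta> * dt) + 1" using ed xy by (simp add: divide_strict_right_mono)
    then have l: "ln (x / (\<eta> * dt) + 1) < ln (y / (\<eta> * dt) + 1)" using posed[of x] posed[of y] xy by simp
    have p: "phi x \<le> phi y" using phimono[of x y] xy by simp
    have "(\<Sum>i=1..N. \<sigma> i * (chempot c0 \<sigma> U i x - chempot c0 \<sigma> U i 0))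
        \<le> (\<Sum>i=1..N. \<sigma> i * (chempot c0 \<sigma> U i y - chempot c0 \<sigma> U i 0))"
    proof (rule sum_mono)
      fix i assume i: "i \<in> {1..N}"
      show "\<sigma> i * (chempot c0 \<sigma> U i x - chempot c0 \<sigma> U i 0) \<le> \<sigma> i * (chempot c0 \<sigma> U i y - chempot c0 \<sigma> U i 0)"
        using term_mono[of x y i] xy i by (simp add: right_diff_distrib)
    qed
    then have "dt * (\<Sum>i=1..N. \<sigma> i * (chempot c0 \<sigma> U i x - chempot c0 \<sigma> U i 0))
        \<le> dt * (\<Sum>i=1..N. \<sigma> i * (chempot c0 \<sigma> U i y - chempot c0 \<sigma> U i 0))"
      using dt_pos by (simp add: mult_left_mono)
    then show "G x < G y" unfolding G_def using l p by linarith
  qed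
  have posne: "\<And>x i. x \<in> {a<..<b} \<Longrightarrow> i \<in> {1..N} \<Longrightarrow> c0 i + \<sigma> i * x \<noteq> 0"
    using pos by fastforce
  have posedne: "\<And>x. x \<in> {a<..<b} \<Longrightarrow> x / (\<eta> * dt) + 1 \<noteq> 0"
    using posed by fastforce
  have c0ne: "\<And>i. i \<in> {1..N} \<Longrightarrow> c0 i \<noteq> 0" using c0p by fastforce
  have Gcont: "continuous_on {a<..<b} G"
    unfolding G_def chempot_def conc_def
    by (intro continuous_intros phicont; use eta_pos dt_pos in \<open>simp add: posne posedne c0ne\<close>)
  have Jalt: "J = (\<lambda>x. (x + \<eta> * dt) * ln (x / (\<eta> * dt) + 1) - x + (LBINT s=ereal 0..x. phi s)
                 + dt * F x - (dt * dF 0) * x)"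
    by (simp add: J_def Jn_def phi_def F_def dF_def fun_eq_iff)
  have Jder: "\<And>x. a < x \<Longrightarrow> x < b \<Longrightarrow> (J has_real_derivative G x) (at x)"
  proof -
    fix x assume x: "a < x" "x < b"
    have d1: "((\<lambda>x. (x + \<eta> * dt) * ln (x / (\<eta> * dt) + 1)) has_real_derivative ln (x / (\<eta> * dt) + 1) + 1) (at x)"
      using xlog_deriv[OF ed posed[OF x(1)]] .
    have d2: "((\<lambda>u. LBINT s=ereal 0..u. phi s) has_real_derivative phi x) (at x)"
      by (rule ftc_open) (use ab x phicont in auto)
    have d3: "(F has_real_derivative dF x) (at x)" using Fderiv x by simp
    have "((\<lambda>x. (x + \<eta> * dt) * ln (x / (\<eta> * dt) + 1) - x + (LBINT s=ereal 0..x. phi s)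
                 + dt * F x - (dt * dF 0) * x) has_real_derivative
          (ln (x / (\<eta> * dt) + 1) + 1) - 1 + phi x + dt * dF x - (dt * dF 0) * 1) (at x)"
      by (intro DERIV_diff DERIV_add d1 d2 DERIV_cmult d3 DERIV_ident)
    moreover have "(ln (x / (\<eta> * dt) + 1) + 1) - 1 + phi x + dt * dF x - (dt * dF 0) * 1 = G x"
      by (simp add: G_def dF_def sum_subtractf right_diff_distrib)
    ultimately show "(J has_real_derivative G x) (at x)" unfolding Jalt by simp
  qed
  have jN: "j \<in> {1..N}" using j rN by auto
  obtain q where q: "0 < q" "q < b" "G q > 0"
  proof -
    define K where "K = (phi 0 + dt * \<alpha> j * ln (c0 j)) / (dt * \<alpha> j)"
    obtain \<delta> where d: "\<delta> > 0" "\<delta> < b" "ln (\<alpha> j * \<delta>) < K"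
      using small_delta[OF aj bpos] by blast
    define q where "q = b - \<delta>"
    have qb: "0 < q" "q < b" using d by (auto simp: q_def)
    have abj: "\<alpha> j * b = c0 j" using j aj by simp
    have cj: "c0 j + \<sigma> j * q = \<alpha> j * \<delta>" using sa[OF j(1)] abj by (simp add: q_def algebra_simps)
    have c0j': "c0 j + \<sigma> j * 0 = c0 j" by simp
    have l1: "0 \<le> ln (q / (\<eta> * dt) + 1)" using qb ed by simp
    have l2: "phi 0 \<le> phi q" using phimono[of 0 q] qb ab by simp
    have l3: "\<sigma> j * (chempot c0 \<sigma> U j q - chempot c0 \<sigma> U j 0) \<le> (\<Sum>i=1..N. \<sigma> i * (chempot c0 \<sigma> U i q - chempot c0 \<sigma> U i 0))"
    proof (rule member_le_sum[OF jN])
      fix i assume i: "i \<in> {1..N} - {j}"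
      show "0 \<le> \<sigma> i * (chempot c0 \<sigma> U i q - chempot c0 \<sigma> U i 0)"
        using term_mono[of 0 q i] i qb ab by (simp add: right_diff_distrib)
    qed simp
    have l4: "\<sigma> j * (chempot c0 \<sigma> U j q - chempot c0 \<sigma> U j 0) = - \<alpha> j * (ln (\<alpha> j * \<delta>) - ln (c0 j))"
      using cj sa[OF j(1)] by (simp add: chempot_def conc_def)
    have l5: "dt * \<alpha> j * ln (\<alpha> j * \<delta>) < dt * \<alpha> j * K" using d dt_pos aj by simp
    have l6: "dt * \<alpha> j * K = phi 0 + dt * \<alpha> j * ln (c0 j)" using dt_pos aj by (simp add: K_def)
    have l7: "dt * (- \<alpha> j * (ln (\<alpha> j * \<delta>) - ln (c0 j))) \<le> dt * (\<Sum>i=1..N. \<sigma> i * (chempot c0 \<sigma> U i q - chempot c0 \<sigma> U i 0))"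
      by (rule mult_left_mono) (use l3 l4 dt_pos in auto)
    have l8: "dt * (- \<alpha> j * (ln (\<alpha> j * \<delta>) - ln (c0 j))) = - (dt * \<alpha> j * ln (\<alpha> j * \<delta>)) + dt * \<alpha> j * ln (c0 j)"
      by (simp add: algebra_simps)
    have "G q > 0" unfolding G_def using l1 l2 l5 l6 l7 l8 by linarith
    then show ?thesis using that qb by blast
  qed
  obtain p where p: "a < p" "p < 0" "G p < 0"
  proof -
    have sum_le: "dt * (\<Sum>i=1..N. \<sigma> i * (chempot c0 \<sigma> U i p - chempot c0 \<sigma> U i 0)) \<le> 0"
      if "a < p" "p < 0" for p
    proof -
      have "(\<Sum>i=1..N. \<sigma> i * (chempot c0 \<sigma> U i p - chempot c0 \<sigma> U i 0)) \<le> 0"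
      proof (rule sum_nonpos)
        fix i assume i: "i \<in> {1..N}"
        show "\<sigma> i * (chempot c0 \<sigma> U i p - chempot c0 \<sigma> U i 0) \<le> 0"
          using term_mono[of p 0 i] i that ab by (simp add: right_diff_distrib)
      qed
      then show ?thesis using dt_pos by (simp add: mult_nonneg_nonpos)
    qed
    have lnle: "ln (p / (\<eta> * dt) + 1) \<le> 0" if "a < p" "p < 0" for p
    proof -
      have "p / (\<eta> * dt) + 1 \<le> 1" using that ed by (simp add: divide_nonpos_pos)
      then show ?thesis using posed[OF that(1)] by simp
    qed
    have phile: "phi p \<le> phi 0" if "a < p" "p < 0" for p using phimono[of p 0] that ab by simp
    have "m \<in> M" by (rule mM)
    then consider "m = \<eta> * dt" | k where "k \<in> {r+1..N}" "m = c0 k / \<beta> k" by (auto simp: M_def)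
    then show ?thesis
    proof cases
      case 1
      obtain \<delta> where d: "\<delta> > 0" "\<delta> < m" "ln ((1 / (\<eta> * dt)) * \<delta>) < - phi 0"
        using small_delta[of "1 / (\<eta> * dt)" m "- phi 0"] ed mpos by auto
      define p where "p = a + \<delta>"
      have pp: "a < p" "p < 0" using d by (auto simp: p_def a_def)
      have "p / (\<eta> * dt) + 1 = (1 / (\<eta> * dt)) * \<delta>"
        using 1 eta_pos dt_pos by (simp add: p_def a_def field_simps)
      then have "ln (p / (\<eta> * dt) + 1) < - phi 0" using d(3) by simp
      then have "G p < 0" unfolding G_def using phile[OF pp] sum_le[OF pp] by linarith
      then show ?thesis using that pp by blast
    next
      case 2
      have bk: "\<beta> k > 0" using 2 beta_pos by auto
      have kN: "k \<in> {1..N}" using 2 by auto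
      define K where "K = (- phi 0 + dt * \<beta> k * ln (c0 k)) / (dt * \<beta> k)"
      obtain \<delta> where d: "\<delta> > 0" "\<delta> < m" "ln (\<beta> k * \<delta>) < K"
        using small_delta[OF bk mpos] by blast
      define p where "p = a + \<delta>"
      have pp: "a < p" "p < 0" using d by (auto simp: p_def a_def)
      have mk: "\<beta> k * m = c0 k" using 2 bk by simp
      have ck: "c0 k + \<sigma> k * p = \<beta> k * \<delta>" using sb[OF 2(1)] mk by (simp add: p_def a_def algebra_simps)
      have l3: "- (\<sigma> k * (chempot c0 \<sigma> U k p - chempot c0 \<sigma> U k 0)) \<le> (\<Sum>i=1..N. - (\<sigma> i * (chempot c0 \<sigma> U i p - chempot c0 \<sigma> U i 0)))"
      proof (rule member_le_sum[OF kN])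
        fix i assume i: "i \<in> {1..N} - {k}"
        show "0 \<le> - (\<sigma> i * (chempot c0 \<sigma> U i p - chempot c0 \<sigma> U i 0))"
          using term_mono[of p 0 i] i pp ab by (simp add: right_diff_distrib)
      qed simp
      then have l3': "(\<Sum>i=1..N. \<sigma> i * (chempot c0 \<sigma> U i p - chempot c0 \<sigma> U i 0)) \<le> \<sigma> k * (chempot c0 \<sigma> U k p - chempot c0 \<sigma> U k 0)"
        by (simp add: sum_negf)
      have l4: "\<sigma> k * (chempot c0 \<sigma> U k p - chempot c0 \<sigma> U k 0) = \<beta> k * (ln (\<beta> k * \<delta>) - ln (c0 k))"
        using ck sb[OF 2(1)] by (simp add: chempot_def conc_def)
      have l5: "dt * \<beta> k * ln (\<beta> k * \<delta>) < dt * \<beta> k * K" using d dt_pos bk by simp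
      have l6: "dt * \<beta> k * K = - phi 0 + dt * \<beta> k * ln (c0 k)" using dt_pos bk by (simp add: K_def)
      have l7: "dt * (\<Sum>i=1..N. \<sigma> i * (chempot c0 \<sigma> U i p - chempot c0 \<sigma> U i 0)) \<le> dt * (\<beta> k * (ln (\<beta> k * \<delta>) - ln (c0 k)))"
        by (rule mult_left_mono) (use l3' l4 dt_pos in auto)
      have l8: "dt * (\<beta> k * (ln (\<beta> k * \<delta>) - ln (c0 k))) = dt * \<beta> k * ln (\<beta> k * \<delta>) - dt * \<beta> k * ln (c0 k)"
        by (simp add: algebra_simps)
      have "G p < 0" unfolding G_def using lnle[OF pp] phile[OF pp] l5 l6 l7 l8 by linarith
      then show ?thesis using that pp by blast
    qed
  qed
  obtain R0 where R0: "p \<le> R0" "R0 \<le> q" "G R0 = 0"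
  proof -
    have "continuous_on {p..q} G" by (rule continuous_on_subset[OF Gcont]) (use p q in auto)
    then show ?thesis using IVT'[of G p 0 q] p q that by auto
  qed
  have R0ab: "R0 \<in> {a<..<b}" using R0 p q by auto
  have uniq: "\<And>R S. R \<in> {a<..<b} \<Longrightarrow> S \<in> {a<..<b} \<Longrightarrow> G R = 0 \<Longrightarrow> G S = 0 \<Longrightarrow> R = S"
    by (metis Gmono greaterThanLessThan_iff linorder_neqE_linordered_idom order_less_irrefl)
  have main: "(\<exists>!R. R \<in> {a<..<b} \<and> G R = 0)
      \<and> (\<forall>R. R \<in> {a<..<b} \<and> G R = 0 \<longrightarrow> (\<forall>S\<in>{a<..<b}. S \<noteq> R \<longrightarrow> J R < J S))
      \<and> strictly_convex_on {a<..<b} J"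
  proof (intro conjI)
    show "\<exists>!R. R \<in> {a<..<b} \<and> G R = 0" using R0ab R0(3) uniq by blast
    show "\<forall>R. R \<in> {a<..<b} \<and> G R = 0 \<longrightarrow> (\<forall>S\<in>{a<..<b}. S \<noteq> R \<longrightarrow> J R < J S)"
    proof (intro allI impI ballI)
      fix R S assume R: "R \<in> {a<..<b} \<and> G R = 0" and S: "S \<in> {a<..<b}" "S \<noteq> R"
      show "J R < J S" by (rule mvt_min[where a=a and b=b and g=G]) (use Jder Gmono R S in auto)
    qed
    show "strictly_convex_on {a<..<b} J" by (rule mvt_strict_conv[where g=G]) (use Jder Gmono in auto)
  qed
  have Deq0: "{R. (\<forall>i\<in>{1..N}. conc c0 \<sigma> R i > 0) \<and> R - 0 + \<eta> * dt > 0} = {a<..<b}"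
    using Deq by (simp add: Rn0)
  have scheme0: "\<And>R. (ln ((R - 0) / (\<eta> * dt) + 1) =
                 - (dvd_phi N c0 \<sigma> U R 0
                    + dt * (\<Sum>i=1..N. \<sigma> i * (chempot c0 \<sigma> U i R - chempot c0 \<sigma> U i 0)))) \<longleftrightarrow> G R = 0"
    unfolding G_def phi_def by auto
  show ?thesis
    unfolding Let_def
    unfolding \<sigma>_def[symmetric]
    unfolding \<eta>_def[symmetric]
    unfolding Rn0
    unfolding Deq0 scheme0 J_def[symmetric]
    using main by blast
qed
end
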